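(* For every $r\ge2$, every eigenvalue $\lambda$ of $M^{(r)}_{++}$, $M^{(r)}_{+-}$ or $M^{(r)}_{--}$, and for every $r\ge0$ every eigenvalue $\lambda$ of $M^{(r)}_{-+}$, satisfies either $\lambda=0$ or $\lambda>\frac32-\sqrt2$ (all these eigenvalues are real).
   Context: Matrices: for $r\ge2$, $M^{(r)}_{++}=M^{(r)}_{+-}$ is the $r\times r$ tridiagonal matrix with first row $(\tfrac12,-1,0,\dots,0)$, rows $i=2,\dots,r-1$ having entries $-\tfrac12,\tfrac32,-1$ in columns $i-1,i,i+1$ (zeros elsewhere), and last row $(0,\dots,0,-1,2)$; $M^{(r)}_{--}$ is identical except that its first row is $(\tfrac32,-1,0,\dots,0)$. $M^{(0)}_{-+}=(1)$, and for $r\ge1$, $M^{(r)}_{-+}$ is the $(r+1)\times(r+1)$ tridiagonal matrix with first row $(1,-2,0,\dots,0)$, rows $i=2,\dots,r$ having entries $-\tfrac12,\tfrac32,-1$ in columns $i-1,i,i+1$, and last row $(0,\dots,0,-1,2)$. For example $M^{(2)}_{++}=\begin{pmatrix}\frac12&-1\\-1&2\end{pmatrix}$, $M^{(2)}_{--}=\begin{pmatrix}\frac32&-1\\-1&2\end{pmatrix}$, $M^{(1)}_{-+}=\begin{pmatrix}1&-2\\-1&2\end{pmatrix}$. *)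

theory Defs
  imports Complex_Main "Jordan_Normal_Form.Char_Poly"
begin

text \<open>Tridiagonal n x n matrix (0-based indices) with first row (a, b, 0, ...),
  middle rows (-1/2, 3/2, -1) around the diagonal, and last row (..., 0, -1, 2).
  Intended for n >= 2.\<close>
definition tri_mat :: "nat \<Rightarrow> real \<Rightarrow> real \<Rightarrow> real mat" where
  "tri_mat n a b = mat n n (\<lambda>(i, j).
     if i = 0 then (if j = 0 then a else if j = 1 then b else 0)
     else if i = n - 1 then (if j = n - 2 then -1 else if j = n - 1 then 2 else 0)
     else (if j + 1 = i then -1/2 else if j = i then 3/2 else if j = i + 1 then -1 else 0))"

definition M_pp :: "nat \<Rightarrow> real mat" where "M_pp r = tri_mat r (1/2) (-1)"
definition M_pm :: "nat \<Rightarrow> real mat" where "M_pm r = M_pp r"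
definition M_mm :: "nat \<Rightarrow> real mat" where "M_mm r = tri_mat r (3/2) (-1)"
definition M_mp :: "nat \<Rightarrow> real mat" where
  "M_mp r = (if r = 0 then mat 1 1 (\<lambda>_. 1) else tri_mat (r + 1) 1 (-2))"

text \<open>Eigenvalues are taken over the complex numbers.\<close>
abbreviation cplx_mat :: "real mat \<Rightarrow> complex mat" where
  "cplx_mat A \<equiv> map_mat complex_of_real A"

end

theory Submission
  imports Defs
begin

lemma eig_fun:
  assumes A: "A \<in> carrier_mat n n" and e: "eigenvalue (cplx_mat A) l"
  shows "\<exists>v::nat\<Rightarrow>complex. (\<exists>i<n. v i \<noteq> 0) \<and>
     (\<forall>i<n. (\<Sum>j<n. complex_of_real (A$$(i,j)) * v j) = l * v i)"
proof -
  from e obtain v where v: "v \<in> carrier_vec n" "v \<noteq> 0\<^sub>v n" "cplx_mat A *\<^sub>v v = l \<cdot>\<^sub>v v"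
    using A unfolding eigenvalue_def eigenvector_def by auto
  have "\<exists>i<n. v $ i \<noteq> 0"
  proof (rule ccontr)
    assume "\<not> ?thesis"
    then have "v = 0\<^sub>v n" using v(1) by (intro eq_vecI) auto
    with v(2) show False by simp
  qed
  moreover have "\<forall>i<n. (\<Sum>j<n. complex_of_real (A$$(i,j)) * v $ j) = l * v $ i"
  proof (intro allI impI)
    fix i assume i: "i < n"
    have "(cplx_mat A *\<^sub>v v) $ i = (l \<cdot>\<^sub>v v) $ i" using v(3) by simp
    then show "(\<Sum>j<n. complex_of_real (A$$(i,j)) * v $ j) = l * v $ i"
      using i A v(1) by (simp add: scalar_prod_def atLeast0LessThan)
  qed
  ultimately show ?thesis by blast
qed


lemma real_eig:
  fixes T :: "nat \<Rightarrow> nat \<Rightarrow> real" and w :: "nat \<Rightarrow> real" and v :: "nat \<Rightarrow> complex"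
  assumes wpos: "\<forall>i<n. w i > 0" and sym: "\<forall>i<n. \<forall>j<n. w i * T i j = w j * T j i"
    and nz: "\<exists>i<n. v i \<noteq> 0"
    and ev: "\<forall>i<n. (\<Sum>j<n. complex_of_real (T i j) * v j) = l * v i"
  shows "Im l = 0"
proof -
  define S where "S = (\<Sum>i<n. \<Sum>j<n. complex_of_real (w i * T i j) * cnj (v i) * v j)"
  define N where "N = (\<Sum>i<n. w i * (cmod (v i))^2)"
  have "S = (\<Sum>i<n. complex_of_real (w i) * cnj (v i) * (\<Sum>j<n. complex_of_real (T i j) * v j))"
    unfolding S_def by (simp add: sum_distrib_left mult_ac)
  also have "\<dots> = (\<Sum>i<n. complex_of_real (w i) * cnj (v i) * (l * v i))"
    using ev by simp
  also have "\<dots> = l * (\<Sum>i<n. complex_of_real (w i * (cmod (v i))^2))"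
    unfolding sum_distrib_left
    by (intro sum.cong refl) (simp add: complex_norm_square[symmetric] mult_ac)
  finally have SN: "S = l * complex_of_real N" unfolding N_def by simp
  have "cnj S = (\<Sum>i<n. \<Sum>j<n. complex_of_real (w i * T i j) * v i * cnj (v j))"
    unfolding S_def by simp
  also have "\<dots> = (\<Sum>j<n. \<Sum>i<n. complex_of_real (w i * T i j) * v i * cnj (v j))"
    by (rule sum.swap)
  also have "\<dots> = S" unfolding S_def
    by (intro sum.cong refl) (use sym in \<open>simp add: mult_ac\<close>)
  finally have cS: "cnj S = S" .
  have Npos: "N > 0"
  proof -
    from nz obtain k where k: "k < n" "v k \<noteq> 0" by blast
    have "N \<ge> w k * (cmod (v k))^2" unfolding N_def
      by (rule member_le_sum[where f="\<lambda>i. w i * (cmod (v i))^2"]) (use k wpos in auto)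
    moreover have "w k * (cmod (v k))^2 > 0" using k wpos by auto
    ultimately show ?thesis by linarith
  qed
  have "Im S = 0" using cS by (metis complex_cnj_complex_of_real complex_is_Real_iff Reals_cnj_iff)
  then have "Im l * N = 0" using SN by simp
  then show ?thesis using Npos by simp
qed



definition E :: "nat \<Rightarrow> real \<Rightarrow> real \<Rightarrow> nat \<Rightarrow> nat \<Rightarrow> real" where
  "E n a b i j = (if i = 0 then (if j = 0 then a else if j = 1 then b else 0)
     else if i = n - 1 then (if j = n - 2 then -1 else if j = n - 1 then 2 else 0)
     else (if j + 1 = i then -1/2 else if j = i then 3/2 else if j = i + 1 then -1 else 0))"

lemma tri_carrier: "tri_mat n a b \<in> carrier_mat n n" by (simp add: tri_mat_def)
lemma tri_idx: "i < n \<Longrightarrow> j < n \<Longrightarrow> tri_mat n a b $$ (i,j) = E n a b i j"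
  by (simp add: tri_mat_def E_def)

definition W :: "nat \<Rightarrow> real \<Rightarrow> nat \<Rightarrow> real" where
  "W n b i = (if i = 0 then 1 else if n = 2 then -b else -b * 2^(min i (n-2)))"

lemma W_pos: "b < 0 \<Longrightarrow> W n b i > 0" by (simp add: W_def mult_neg_pos)

lemma W_adj: assumes "n \<ge> 2" "i + 1 < n"
  shows "W n b i * E n a b i (i+1) = W n b (i+1) * E n a b (i+1) i"
proof (cases "i = 0")
  case True
  then show ?thesis using assms by (cases "n = 2") (auto simp: W_def E_def)
next
  case False
  show ?thesis
  proof (cases "i + 2 = n")
    case True
    then have "min i (n-2) = i" "min (i+1) (n-2) = i" by auto
    then show ?thesis using True False assms by (simp add: W_def E_def)
  next
    case F2: False
    then have "min i (n-2) = i" "min (i+1) (n-2) = i+1" "n \<noteq> 2" "i \<noteq> n - 1" "i + 1 \<noteq> n - 1"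
      using assms by auto
    then show ?thesis using F2 False assms by (simp add: W_def E_def)
  qed
qed

lemma W_sym: assumes "n \<ge> 2" "i < n" "j < n"
  shows "W n b i * E n a b i j = W n b j * E n a b j i"
proof -
  consider "i = j" | "j = i + 1" | "i = j + 1" | "j > i + 1" | "i > j + 1" by linarith
  then show ?thesis
  proof cases
    case 2 then show ?thesis using W_adj assms by simp
  next
    case 3 then show ?thesis using W_adj[of n j] assms by simp
  next
    case 4 then show ?thesis using assms by (auto simp: E_def)
  next
    case 5 then show ?thesis using assms by (auto simp: E_def)
  qed simp
qed

lemma row_sum: assumes n: "n \<ge> 2" and i: "i < n"
  shows "(\<Sum>j<n. E n a b i j * x j) =
    (if i = 0 then a * x 0 + b * x 1 else if i = n - 1 then - x (n-2) + 2 * x (n-1)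
     else -1/2 * x (i-1) + 3/2 * x i - x (i+1))"
proof (cases "i = 0")
  case True
  have "(\<Sum>j<n. E n a b i j * x j) = (\<Sum>j\<in>{0,1}. E n a b i j * x j)"
    by (rule sum.mono_neutral_right) (use n True in \<open>auto simp: E_def\<close>)
  then show ?thesis using True n by (simp add: E_def)
next
  case F: False
  show ?thesis
  proof (cases "i = n - 1")
    case True
    have "(\<Sum>j<n. E n a b i j * x j) = (\<Sum>j\<in>{n-2,n-1}. E n a b i j * x j)"
      by (rule sum.mono_neutral_right) (use n True in \<open>auto simp: E_def\<close>)
    moreover have "n - 1 \<noteq> n - 2" using n by arith
    ultimately show ?thesis using True n F by (simp add: E_def)
  next
    case False
    have "(\<Sum>j<n. E n a b i j * x j) = (\<Sum>j\<in>{i-1,i,i+1}. E n a b i j * x j)"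
      by (rule sum.mono_neutral_right) (use n i F False in \<open>auto simp: E_def\<close>)
    moreover have "Suc (i - 1) = i" "i - 1 \<noteq> i" "i - 1 \<noteq> Suc i" using F by auto
    ultimately show ?thesis using False n F i by (simp add: E_def)
  qed
qed



lemma step_ineq:
  fixes s a u v t :: real
  assumes s2: "s^2 \<ge> 2" "s > 0" and a: "a = s + 1/2"
    and pos: "u > 0" and lo: "v \<ge> s * u" and t: "t = 2*s*v - 2*u"
    and up: "s \<le> 3/2 \<longrightarrow> v \<le> a * u" and dn: "s \<ge> 3/2 \<longrightarrow> v \<ge> a * u"
  shows "v > 0 \<and> t \<ge> s * v \<and> (s \<le> 3/2 \<longrightarrow> t \<le> a * v) \<and> (s \<ge> 3/2 \<longrightarrow> t \<ge> a * v)"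
proof -
  have vpos: "v > 0" using lo pos s2 by (metis mult_pos_pos order_less_le_trans)
  have e1: "s * (t - s * v) = s^2 * v - 2 * s * u" unfolding t by (simp add: algebra_simps power2_eq_square)
  have e2: "s * u \<le> v" using lo by simp
  have e3: "s^2 * v - 2 * v \<ge> 0" using s2 vpos by (simp add: mult_right_mono)
  have "s * (t - s * v) \<ge> 0" using e1 e2 e3 by linarith
  then have l1: "t \<ge> s * v" using s2 by (simp add: zero_le_mult_iff)
  have apos: "a > 0" using a s2 by simp
  have l2: "t \<le> a * v" if "s \<le> 3/2"
  proof -
    have "a * (t - a * v) = 2*s*a*v - 2*a*u - a^2 * v" unfolding t by (simp add: algebra_simps power2_eq_square)
    also have "\<dots> \<le> 2*s*a*v - 2*v - a^2*v" using up that by simp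
    also have "\<dots> = - (9/4 - s^2) * v" using a by (simp add: algebra_simps power2_eq_square)
    also have "\<dots> \<le> 0"
    proof -
      have "s * s \<le> (3/2) * (3/2)" using that s2 by (intro mult_mono) auto
      then show ?thesis using vpos by (intro mult_nonpos_nonneg) (auto simp: power2_eq_square)
    qed
    finally show ?thesis using apos by (simp add: mult_le_0_iff)
  qed
  have l3: "t \<ge> a * v" if "s \<ge> 3/2"
  proof -
    have e1: "a * (t - a * v) = 2*s*a*v - 2*a*u - a^2 * v" unfolding t by (simp add: algebra_simps power2_eq_square)
    have e2: "a * u \<le> v" using dn that by simp
    have e3: "2*s*a*v - 2*v - a^2*v = (s^2 - 9/4) * v" using a by (simp add: algebra_simps power2_eq_square)
    have e4: "(s^2 - 9/4) * v \<ge> 0"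
    proof -
      have "(3/2) * (3/2) \<le> s * s" using that s2 by (intro mult_mono) auto
      then show ?thesis using vpos by (intro mult_nonneg_nonneg) (auto simp: power2_eq_square)
    qed
    have "a * (t - a * v) \<ge> 0" using e1 e2 e3 e4 by linarith
    then show ?thesis using apos by (simp add: zero_le_mult_iff)
  qed
  show ?thesis using vpos l1 l2 l3 by blast
qed

lemma backrec:
  fixes x :: "nat \<Rightarrow> real"
  assumes n: "n \<ge> 2" and s2: "s^2 \<ge> 2" "s > 0"
    and L: "x (n-2) = (s + 1/2) * x (n-1)"
    and M: "\<forall>i. 1 \<le> i \<and> i \<le> n-2 \<longrightarrow> x (i-1) = 2*s*x i - 2 * x (i+1)"
    and pos: "x (n-1) > 0"
  shows "x 1 > 0 \<and> x 0 \<ge> s * x 1 \<and> (s \<le> 3/2 \<longrightarrow> x 0 \<le> (s+1/2) * x 1)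
         \<and> (s \<ge> 3/2 \<longrightarrow> x 0 \<ge> (s+1/2) * x 1)"
proof -
  define a where "a = s + 1/2"
  define w where "w j = x (n - 1 - j)" for j
  have P: "w k > 0 \<and> w (k+1) \<ge> s * w k \<and> (s \<le> 3/2 \<longrightarrow> w (k+1) \<le> a * w k)
         \<and> (s \<ge> 3/2 \<longrightarrow> w (k+1) \<ge> a * w k)" if "k + 1 \<le> n - 1" for k
    using that
  proof (induction k)
    case 0
    have "w 1 = a * w 0" using L n unfolding w_def a_def by (simp add: numeral_2_eq_2)
    then show ?case using pos s2 by (simp add: w_def a_def)
  next
    case (Suc k)
    then have IH: "w k > 0 \<and> w (k+1) \<ge> s * w k \<and> (s \<le> 3/2 \<longrightarrow> w (k+1) \<le> a * w k)
         \<and> (s \<ge> 3/2 \<longrightarrow> w (k+1) \<ge> a * w k)" by simp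
    define i where "i = n - 2 - k"
    have i: "1 \<le> i" "i \<le> n - 2" using Suc.prems unfolding i_def by auto
    have e1: "i - 1 = n - 1 - (k+2)" "i = n - 1 - (k+1)" "i + 1 = n - 1 - k"
      using Suc.prems unfolding i_def by auto
    have t: "w (k+2) = 2 * s * w (k+1) - 2 * w k"
      using M i e1 unfolding w_def by metis
    show ?case using step_ineq[OF s2 a_def, of "w k" "w (k+1)" "w (k+2)"] IH t by simp
  qed
  have "n - 2 + 1 \<le> n - 1" using n by simp
  from P[OF this] have "w (n-2) > 0 \<and> w (n-1) \<ge> s * w (n-2) \<and> (s \<le> 3/2 \<longrightarrow> w (n-1) \<le> a * w (n-2))
         \<and> (s \<ge> 3/2 \<longrightarrow> w (n-1) \<ge> a * w (n-2))" using n by (simp add: Suc_diff_Suc numeral_2_eq_2)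
  moreover have "w (n-2) = x 1" "w (n-1) = x 0" using n unfolding w_def by auto
  ultimately show ?thesis unfolding a_def by simp
qed



lemma zero_prop:
  fixes x :: "nat \<Rightarrow> real"
  assumes n: "n \<ge> 2"
    and L: "x (n-2) = c * x (n-1)"
    and M: "\<forall>i. 1 \<le> i \<and> i \<le> n-2 \<longrightarrow> x (i-1) = 2*s*x i - 2 * x (i+1)"
    and z: "x (n-1) = 0"
  shows "\<forall>i<n. x i = 0"
proof -
  define w where "w j = x (n - 1 - j)" for j
  have P: "w k = 0 \<and> w (k+1) = 0" if "k + 1 \<le> n - 1" for k
    using that
  proof (induction k)
    case 0
    then show ?case using L z n unfolding w_def by (simp add: numeral_2_eq_2)
  next
    case (Suc k)
    define i where "i = n - 2 - k"
    have i: "1 \<le> i" "i \<le> n - 2" using Suc.prems unfolding i_def by auto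
    have e1: "i - 1 = n - 1 - (k+2)" "i = n - 1 - (k+1)" "i + 1 = n - 1 - k"
      using Suc.prems unfolding i_def by auto
    have t: "w (k+2) = 2 * s * w (k+1) - 2 * w k"
      using M i e1 unfolding w_def by metis
    then show ?case using Suc by simp
  qed
  show ?thesis
  proof (intro allI impI)
    fix i assume i: "i < n"
    show "x i = 0"
    proof (cases "i = n - 1")
      case True then show ?thesis using z by simp
    next
      case False
      then have "n - 1 - i - 1 + 1 \<le> n - 1" "n - 1 - (n - 1 - i - 1 + 1) = i" using i by auto
      then show ?thesis using P[of "n - 1 - i - 1"] unfolding w_def by metis
    qed
  qed
qed

lemma signed:
  fixes x :: "nat \<Rightarrow> real"
  assumes n: "n \<ge> 2" and s2: "s^2 \<ge> 2" "s > 0"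
    and F: "a * x 0 + b * x 1 = \<mu> * x 0"
    and L: "x (n-2) = (s + 1/2) * x (n-1)"
    and M: "\<forall>i. 1 \<le> i \<and> i \<le> n-2 \<longrightarrow> x (i-1) = 2*s*x i - 2 * x (i+1)"
    and nz: "\<exists>i<n. x i \<noteq> 0"
  shows "\<exists>y0 y1. a * y0 + b * y1 = \<mu> * y0 \<and> y1 > 0 \<and> y0 \<ge> s * y1 \<and>
     (s \<le> 3/2 \<longrightarrow> y0 \<le> (s+1/2) * y1) \<and> (s \<ge> 3/2 \<longrightarrow> y0 \<ge> (s+1/2) * y1)"
proof -
  consider "x (n-1) > 0" | "x (n-1) < 0" | "x (n-1) = 0" by linarith
  then show ?thesis
  proof cases
    case 1
    from backrec[OF n s2 L M 1] F show ?thesis by blast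
  next
    case 2
    define y where "y i = - x i" for i
    have L': "y (n-2) = (s + 1/2) * y (n-1)" using L unfolding y_def by simp
    have M': "\<forall>i. 1 \<le> i \<and> i \<le> n-2 \<longrightarrow> y (i-1) = 2*s*y i - 2 * y (i+1)"
      using M unfolding y_def by simp
    have F': "a * y 0 + b * y 1 = \<mu> * y 0" using F unfolding y_def by (simp add: algebra_simps)
    have pos: "y (n-1) > 0" using 2 unfolding y_def by simp
    from backrec[OF n s2 L' M' pos] F' show ?thesis by blast
  next
    case 3
    from zero_prop[OF n L M 3] nz show ?thesis by auto
  qed
qed



lemma real_rows:
  fixes v :: "nat \<Rightarrow> complex" and T :: "nat \<Rightarrow> nat \<Rightarrow> real"
  assumes ev: "\<forall>i<n. (\<Sum>j<n. complex_of_real (T i j) * v j) = complex_of_real \<mu> * v i"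
    and nz: "\<exists>i<n. v i \<noteq> 0"
  shows "\<exists>x::nat\<Rightarrow>real. (\<exists>i<n. x i \<noteq> 0) \<and> (\<forall>i<n. (\<Sum>j<n. T i j * x j) = \<mu> * x i)"
proof (cases "\<exists>i<n. Re (v i) \<noteq> 0")
  case True
  have "\<forall>i<n. (\<Sum>j<n. T i j * Re (v j)) = \<mu> * Re (v i)"
  proof (intro allI impI)
    fix i assume "i < n"
    then have "Re (\<Sum>j<n. complex_of_real (T i j) * v j) = Re (complex_of_real \<mu> * v i)" using ev by simp
    then show "(\<Sum>j<n. T i j * Re (v j)) = \<mu> * Re (v i)" by (simp add: Re_sum)
  qed
  with True show ?thesis by (intro exI[of _ "\<lambda>i. Re (v i)"]) simp
next
  case False
  have "\<exists>i<n. Im (v i) \<noteq> 0"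
  proof -
    from nz obtain i where i: "i < n" "v i \<noteq> 0" by blast
    with False have "Re (v i) = 0" by blast
    with i have "Im (v i) \<noteq> 0" using complex_eqI[of "v i" 0] by auto
    with i show ?thesis by blast
  qed
  moreover have "\<forall>i<n. (\<Sum>j<n. T i j * Im (v j)) = \<mu> * Im (v i)"
  proof (intro allI impI)
    fix i assume "i < n"
    then have "Im (\<Sum>j<n. complex_of_real (T i j) * v j) = Im (complex_of_real \<mu> * v i)" using ev by simp
    then show "(\<Sum>j<n. T i j * Im (v j)) = \<mu> * Im (v i)" by (simp add: Im_sum)
  qed
  ultimately show ?thesis by (intro exI[of _ "\<lambda>i. Im (v i)"]) simp
qed

lemma tri_reduce:
  assumes n: "n \<ge> 2" and b: "b < 0" and e: "eigenvalue (cplx_mat (tri_mat n a b)) l"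
  shows "l \<in> \<real> \<and> (Re l \<le> 3/2 - sqrt 2 \<longrightarrow>
     (\<exists>y0 y1. a * y0 + b * y1 = Re l * y0 \<and> y1 > 0 \<and> y0 \<ge> (3/2 - Re l) * y1 \<and>
     ((3/2 - Re l) \<le> 3/2 \<longrightarrow> y0 \<le> ((3/2 - Re l)+1/2) * y1) \<and>
     ((3/2 - Re l) \<ge> 3/2 \<longrightarrow> y0 \<ge> ((3/2 - Re l)+1/2) * y1)))"
proof -
  obtain v where nz: "\<exists>i<n. v i \<noteq> 0"
    and ev0: "\<forall>i<n. (\<Sum>j<n. complex_of_real (tri_mat n a b $$ (i,j)) * v j) = l * v i"
    using eig_fun[OF tri_carrier e] by blast
  have ev: "\<forall>i<n. (\<Sum>j<n. complex_of_real (E n a b i j) * v j) = l * v i"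
    using ev0 tri_idx by simp
  have wp: "\<forall>i<n. W n b i > 0" using W_pos[OF b] by blast
  have ws: "\<forall>i<n. \<forall>j<n. W n b i * E n a b i j = W n b j * E n a b j i" using W_sym[OF n] by blast
  have iml: "Im l = 0"
    by (rule real_eig[where T="E n a b" and w="W n b", OF wp ws nz ev])
  define \<mu> where "\<mu> = Re l"
  have l: "l = complex_of_real \<mu>" using iml unfolding \<mu>_def by (simp add: complex_eqI)
  have lR: "l \<in> \<real>" using l by simp
  have ev': "\<forall>i<n. (\<Sum>j<n. complex_of_real (E n a b i j) * v j) = complex_of_real \<mu> * v i"
    using ev l by metis
  obtain x where xnz: "\<exists>i<n. x i \<noteq> 0" and rows: "\<forall>i<n. (\<Sum>j<n. E n a b i j * x j) = \<mu> * x i"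
    using real_rows[OF ev' nz] by blast
  define s where "s = 3/2 - \<mu>"
  have F: "a * x 0 + b * x 1 = \<mu> * x 0"
  proof -
    have "(\<Sum>j<n. E n a b 0 j * x j) = \<mu> * x 0" using rows n by simp
    moreover have "(\<Sum>j<n. E n a b 0 j * x j) = a * x 0 + b * x 1" using row_sum[OF n, of 0] n by simp
    ultimately show ?thesis by simp
  qed
  have Lr: "- x (n-2) + 2 * x (n-1) = \<mu> * x (n-1)"
  proof -
    have "(\<Sum>j<n. E n a b (n-1) j * x j) = \<mu> * x (n-1)" using rows n by simp
    moreover have "(\<Sum>j<n. E n a b (n-1) j * x j) = - x (n-2) + 2 * x (n-1)"
      using row_sum[OF n, of "n-1"] n by simp
    ultimately show ?thesis by simp
  qed
  then have L: "x (n-2) = (s + 1/2) * x (n-1)" unfolding s_def by (simp add: algebra_simps)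
  have M: "\<forall>i. 1 \<le> i \<and> i \<le> n-2 \<longrightarrow> x (i-1) = 2*s*x i - 2 * x (i+1)"
  proof (intro allI impI)
    fix i assume i: "1 \<le> i \<and> i \<le> n - 2"
    then have "i < n" "i \<noteq> 0" "i \<noteq> n - 1" using n by auto
    then have "-1/2 * x (i-1) + 3/2 * x i - x (i+1) = \<mu> * x i"
      using rows[rule_format, of i] row_sum[OF n \<open>i < n\<close>, of a b x] by simp
    then show "x (i-1) = 2*s*x i - 2 * x (i+1)" unfolding s_def by (simp add: algebra_simps)
  qed
  have "(\<exists>y0 y1. a * y0 + b * y1 = \<mu> * y0 \<and> y1 > 0 \<and> y0 \<ge> s * y1 \<and>
     (s \<le> 3/2 \<longrightarrow> y0 \<le> (s+1/2) * y1) \<and> (s \<ge> 3/2 \<longrightarrow> y0 \<ge> (s+1/2) * y1))"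
    if "\<mu> \<le> 3/2 - sqrt 2"
  proof -
    have ss: "s \<ge> sqrt 2" using that unfolding s_def by simp
    have s0: "s > 0" using ss by (smt (verit) real_sqrt_gt_zero)
    have "s^2 \<ge> (sqrt 2)^2" using ss by (intro power_mono) auto
    then have s2: "s^2 \<ge> 2" by simp
    show ?thesis by (rule signed[OF n s2 s0 F L M xnz])
  qed
  then show ?thesis using lR unfolding s_def \<mu>_def by blast
qed



lemma contra:
  fixes y0 y1 s c :: real
  assumes y0: "y0 > 0" and y1: "y1 = c * y0" and ne: "s \<noteq> 3/2"
    and up: "s \<le> 3/2 \<longrightarrow> y0 \<le> (s+1/2) * y1" and dn: "s \<ge> 3/2 \<longrightarrow> y0 \<ge> (s+1/2) * y1"
    and k1: "s < 3/2 \<Longrightarrow> (s+1/2) * c < 1" and k2: "s > 3/2 \<Longrightarrow> (s+1/2) * c > 1"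
  shows False
proof (cases "s < 3/2")
  case True
  have "y0 \<le> ((s+1/2) * c) * y0" using up True y1 by (simp add: mult_ac)
  moreover have "((s+1/2) * c) * y0 < 1 * y0" using k1[OF True] y0 by (intro mult_strict_right_mono)
  ultimately show False by simp
next
  case False
  then have T: "s > 3/2" using ne by simp
  have "y0 \<ge> ((s+1/2) * c) * y0" using dn T y1 by (simp add: mult_ac)
  moreover have "((s+1/2) * c) * y0 > 1 * y0" using k2[OF T] y0 by (intro mult_strict_right_mono)
  ultimately show False by simp
qed

lemma sqrt2_facts: "sqrt 2 > (1::real)" "sqrt 2 < (3/2::real)"
proof -
  show "sqrt 2 > (1::real)" by (simp add: real_less_rsqrt)
  have "sqrt 2 < sqrt (9/4::real)" by simp
  also have "sqrt (9/4::real) = 3/2" by (simp add: real_sqrt_divide)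
  finally show "sqrt 2 < (3/2::real)" .
qed

lemma family:
  assumes n: "n \<ge> 2" and b: "b < 0" and e: "eigenvalue (cplx_mat (tri_mat n a b)) l"
    and fam: "\<And>s y0 y1. s \<ge> sqrt 2 \<Longrightarrow> s \<noteq> 3/2 \<or> a = 3/2 \<Longrightarrow> y0 > 0 \<Longrightarrow> y1 > 0 \<Longrightarrow> y0 \<ge> s * y1 \<Longrightarrow>
       a * y0 + b * y1 = (3/2 - s) * y0 \<Longrightarrow>
       (s \<le> 3/2 \<longrightarrow> y0 \<le> (s+1/2) * y1) \<Longrightarrow> (s \<ge> 3/2 \<longrightarrow> y0 \<ge> (s+1/2) * y1) \<Longrightarrow> False"
  shows "l \<in> \<real> \<and> (l = 0 \<or> Re l > 3/2 - sqrt 2)"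
proof -
  note R = tri_reduce[OF n b e]
  have lR: "l \<in> \<real>" using R by blast
  then have l: "l = complex_of_real (Re l)" by (simp add: complex_is_Real_iff complex_eqI)
  have "l = 0 \<or> Re l > 3/2 - sqrt 2"
  proof (rule ccontr)
    assume c: "\<not> ?thesis"
    then have le: "Re l \<le> 3/2 - sqrt 2" by simp
    have ne: "Re l \<noteq> 0" using c l by (metis of_real_0)
    from R le obtain y0 y1 where F: "a * y0 + b * y1 = Re l * y0" and y1: "y1 > 0"
      and lo: "y0 \<ge> (3/2 - Re l) * y1"
      and up: "(3/2 - Re l) \<le> 3/2 \<longrightarrow> y0 \<le> ((3/2 - Re l)+1/2) * y1"
      and dn: "(3/2 - Re l) \<ge> 3/2 \<longrightarrow> y0 \<ge> ((3/2 - Re l)+1/2) * y1" by blast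
    define s where "s = 3/2 - Re l"
    have ss: "s \<ge> sqrt 2" using le unfolding s_def by simp
    have "s > 0" using ss sqrt2_facts by linarith
    then have y0: "y0 > 0" using lo y1 unfolding s_def by (smt (verit) mult_pos_pos)
    have "s \<noteq> 3/2" using ne unfolding s_def by simp
    show False
      by (rule fam[of s y0 y1]) (use ss \<open>s \<noteq> 3/2\<close> y0 y1 lo F up dn in \<open>auto simp: s_def\<close>)
  qed
  with lR show ?thesis by blast
qed

lemma pp_case: assumes "r \<ge> 2" "eigenvalue (cplx_mat (M_pp r)) l"
  shows "l \<in> \<real> \<and> (l = 0 \<or> Re l > 3/2 - sqrt 2)"
proof (rule family[of r "-1" "1/2"])
  show "eigenvalue (cplx_mat (tri_mat r (1/2) (-1))) l" using assms(2) by (simp add: M_pp_def)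
next
  fix s y0 y1 :: real
  assume ss: "s \<ge> sqrt 2" and ne: "s \<noteq> 3/2 \<or> (1/2::real) = 3/2" and y0: "y0 > 0"
    and F: "1/2 * y0 + -1 * y1 = (3/2 - s) * y0"
    and up: "s \<le> 3/2 \<longrightarrow> y0 \<le> (s+1/2) * y1" and dn: "s \<ge> 3/2 \<longrightarrow> y0 \<ge> (s+1/2) * y1"
  have s1: "s > 1" using ss sqrt2_facts by linarith
  have y1: "y1 = (s - 1) * y0" using F by (simp add: algebra_simps)
  show False
  proof (rule contra[OF y0 y1 _ up dn])
    show "s \<noteq> 3/2" using ne by simp
    have eq: "(s + 1/2) * (s - 1) = 1 + (s - 3/2) * (s + 1)" by (simp add: algebra_simps field_simps)
    show "(s+1/2) * (s-1) < 1" if "s < 3/2"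
      using eq mult_neg_pos[of "s - 3/2" "s+1"] that s1 by simp
    show "(s+1/2) * (s-1) > 1" if "s > 3/2"
      using eq mult_pos_pos[of "s - 3/2" "s+1"] that s1 by simp
  qed
qed (use assms in auto)

lemma mm_case: assumes "r \<ge> 2" "eigenvalue (cplx_mat (M_mm r)) l"
  shows "l \<in> \<real> \<and> (l = 0 \<or> Re l > 3/2 - sqrt 2)"
proof (rule family[of r "-1" "3/2"])
  show "eigenvalue (cplx_mat (tri_mat r (3/2) (-1))) l" using assms(2) by (simp add: M_mm_def)
next
  fix s y0 y1 :: real
  assume ss: "s \<ge> sqrt 2" and y0: "y0 > 0" and lo: "y0 \<ge> s * y1"
    and F: "3/2 * y0 + -1 * y1 = (3/2 - s) * y0"
  have y1: "y1 = s * y0" using F by (simp add: algebra_simps)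
  have s0: "s \<ge> 0" using ss sqrt2_facts by linarith
  have "s * s \<ge> sqrt 2 * sqrt 2" using ss s0 by (intro mult_mono) auto
  then have s2: "s * s \<ge> 2" by simp
  have "y0 \<ge> (s * s) * y0" using lo y1 by (simp add: mult_ac)
  moreover have "(s * s) * y0 \<ge> 2 * y0" using s2 y0 by (intro mult_right_mono) auto
  ultimately show False using y0 by simp
qed (use assms in auto)

lemma mp_case: assumes "eigenvalue (cplx_mat (M_mp r)) l"
  shows "l \<in> \<real> \<and> (l = 0 \<or> Re l > 3/2 - sqrt 2)"
proof (cases "r = 0")
  case True
  obtain v where nz: "\<exists>i<1. v i \<noteq> 0"
    and ev: "\<forall>i<1. (\<Sum>j<1. complex_of_real (mat 1 1 (\<lambda>_. 1) $$ (i,j)) * v j) = l * v i"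
    using eig_fun[of "mat 1 1 (\<lambda>_. 1)" 1 l] assms True by (auto simp: M_mp_def)
  have "v 0 = l * v 0" "v 0 \<noteq> 0" using nz ev by auto
  then have "l = 1" by (metis mult_cancel_right1)
  moreover have "3/2 - sqrt 2 < (1::real)" using sqrt2_facts by linarith
  ultimately show ?thesis by simp
next
  case False
  show ?thesis
  proof (rule family[of "r+1" "-2" 1])
    show "eigenvalue (cplx_mat (tri_mat (r+1) 1 (-2))) l" using assms False by (simp add: M_mp_def)
  next
    fix s y0 y1 :: real
    assume ss: "s \<ge> sqrt 2" and ne: "s \<noteq> 3/2 \<or> (1::real) = 3/2" and y0: "y0 > 0"
      and F: "1 * y0 + -2 * y1 = (3/2 - s) * y0"
      and up: "s \<le> 3/2 \<longrightarrow> y0 \<le> (s+1/2) * y1" and dn: "s \<ge> 3/2 \<longrightarrow> y0 \<ge> (s+1/2) * y1"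
    have s1: "s > 1" using ss sqrt2_facts by linarith
    have y1: "y1 = ((s - 1/2)/2) * y0" using F by (simp add: algebra_simps)
    show False
    proof (rule contra[OF y0 y1 _ up dn])
      show "s \<noteq> 3/2" using ne by simp
      have eq: "(s + 1/2) * ((s - 1/2)/2) = 1 + (s - 3/2) * (s + 3/2) / 2" by (simp add: algebra_simps field_simps)
      show "(s+1/2) * ((s-1/2)/2) < 1" if "s < 3/2"
        using eq mult_neg_pos[of "s - 3/2" "s+3/2"] that s1 by simp
      show "(s+1/2) * ((s-1/2)/2) > 1" if "s > 3/2"
        using eq mult_pos_pos[of "s - 3/2" "s+3/2"] that s1 by simp
    qed
  qed (use False in auto)
qed

theorem mainTheorem13:
  shows "(\<forall>r \<ge> 2. \<forall>l::complex.
            (eigenvalue (cplx_mat (M_pp r)) l \<or> eigenvalue (cplx_mat (M_pm r)) l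
             \<or> eigenvalue (cplx_mat (M_mm r)) l) \<longrightarrow>
            l \<in> \<real> \<and> (l = 0 \<or> Re l > 3/2 - sqrt 2))
       \<and> (\<forall>r. \<forall>l::complex. eigenvalue (cplx_mat (M_mp r)) l \<longrightarrow>
            l \<in> \<real> \<and> (l = 0 \<or> Re l > 3/2 - sqrt 2))"
    using pp_case mm_case mp_case by (auto simp: M_pm_def)

end
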